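(* $MR(4) = 5$; that is, every extremal point of $\Gamma(4)$ has rank at most $5$, and there exists an extremal point of $\Gamma(4)$ of rank exactly $5$.
   Context: A state $\rho$ on $M_n(\mathbb{C}) \otimes M_n(\mathbb{C})$ is a marginal tracial state if $\rho(A\otimes I) = \mathrm{tr}(A)$ and $\rho(I \otimes B) = \mathrm{tr}(B)$ for all $A,B \in M_n(\mathbb{C})$, where $\mathrm{tr}$ is the normalized trace. $\Gamma(n)$ is the convex set of all marginal tracial states on $M_n(\mathbb{C}) \otimes M_n(\mathbb{C})$. For a state $\rho$, $\mathrm{rank}(\rho)$ is the rank of its density matrix. $MR(n)$ denotes the maximum of $\mathrm{rank}(\rho)$ over all extremal points $\rho$ of $\Gamma(n)$. *)

theory Defs
  imports "HOL-Analysis.Analysis"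
begin

text \<open>Matrices in M_n(C) are complex^'n^'n (n = CARD('n)); matrices in
M_n(C) \<otimes> M_n(C) = M_{n^2}(C) are indexed by pairs: complex^('n*'n)^('n*'n).
A state on M_n \<otimes> M_n is represented by its density matrix D, via
rho_D(X) = Tr(D X).\<close>

definition mtrace :: "complex^'m^'m \<Rightarrow> complex" where
  "mtrace A = (\<Sum>i\<in>UNIV. A $ i $ i)"

definition ntrace :: "complex^'n^'n \<Rightarrow> complex" where
  "ntrace A = mtrace A / of_nat CARD('n)"

definition tensor :: "complex^'n^'n \<Rightarrow> complex^'n^'n \<Rightarrow> complex^('n\<times>'n)^('n\<times>'n)" where
  "tensor A B = (\<chi> p. \<chi> q. A $ fst p $ fst q * B $ snd p $ snd q)"

definition psd :: "complex^'m^'m \<Rightarrow> bool" where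
  "psd D \<longleftrightarrow> (\<forall>v. Im (\<Sum>i\<in>UNIV. \<Sum>j\<in>UNIV. cnj (v $ i) * D $ i $ j * v $ j) = 0
                \<and> 0 \<le> Re (\<Sum>i\<in>UNIV. \<Sum>j\<in>UNIV. cnj (v $ i) * D $ i $ j * v $ j))"

definition density_matrix :: "complex^'m^'m \<Rightarrow> bool" where
  "density_matrix D \<longleftrightarrow> psd D \<and> mtrace D = 1"

definition state_of :: "complex^'m^'m \<Rightarrow> complex^'m^'m \<Rightarrow> complex" where
  "state_of D X = mtrace (D ** X)"

definition marginal_tracial :: "complex^('n::finite\<times>'n)^('n\<times>'n) \<Rightarrow> bool" where
  "marginal_tracial D \<longleftrightarrow> density_matrix D
     \<and> (\<forall>A::complex^'n^'n. state_of D (tensor A (mat 1)) = ntrace A)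
     \<and> (\<forall>B::complex^'n^'n. state_of D (tensor (mat 1) B) = ntrace B)"

definition Gamma :: "(complex^('n::finite\<times>'n)^('n\<times>'n)) set" where
  "Gamma = {D. marginal_tracial D}"

end

theory Submission
  imports Defs
begin


definition qf :: "complex^'m^'m \<Rightarrow> complex^'m \<Rightarrow> complex" where
  "qf D v = (\<Sum>i\<in>UNIV. \<Sum>j\<in>UNIV. cnj (v $ i) * D $ i $ j * v $ j)"

definition mg1 :: "complex^('n::finite\<times>'n)^('n\<times>'n) \<Rightarrow> complex^'n^'n" where
  "mg1 D = (\<chi> x y. \<Sum>z\<in>UNIV. D $ (x,z) $ (y,z))"
definition mg2 :: "complex^('n::finite\<times>'n)^('n\<times>'n) \<Rightarrow> complex^'n^'n" where
  "mg2 D = (\<chi> x y. \<Sum>z\<in>UNIV. D $ (z,x) $ (z,y))"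

lemma sum_UNIV_pair: "(\<Sum>p\<in>(UNIV::('a::finite\<times>'b::finite) set). f p) = (\<Sum>x\<in>UNIV. \<Sum>y\<in>UNIV. f (x,y))"
  by (simp add: sum.cartesian_product UNIV_Times_UNIV[symmetric] del: UNIV_Times_UNIV)

lemma sum_delta1: "(\<Sum>z'\<in>(UNIV::'a::finite set). g z' * (c * (if z' = z then 1 else (0::'b::comm_semiring_1)))) = g z * c"
  by (simp add: if_distrib cong: if_cong)
lemma sum_delta2: "(\<Sum>z'\<in>(UNIV::'a::finite set). g z' * ((if z' = z then 1 else (0::'b::comm_semiring_1)) * c z')) = g z * c z"
proof -
  have "\<And>z'. g z' * ((if z' = z then 1 else 0) * c z') = (if z' = z then g z * c z else 0)" by simp
  then show ?thesis by simp
qed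

lemma state_tensor1:
  fixes D :: "complex^('n::finite\<times>'n)^('n\<times>'n)"
  shows "state_of D (tensor A (mat 1)) = (\<Sum>x\<in>UNIV. \<Sum>y\<in>UNIV. mg1 D $ x $ y * A $ y $ x)"
proof -
  have "state_of D (tensor A (mat 1)) = (\<Sum>p\<in>UNIV. \<Sum>q\<in>UNIV. D$p$q * (A $ fst q $ fst p * (if snd q = snd p then 1 else 0)))"
    by (simp add: state_of_def mtrace_def matrix_matrix_mult_def tensor_def mat_def)
  also have "\<dots> = (\<Sum>x\<in>UNIV. \<Sum>z\<in>UNIV. \<Sum>y\<in>UNIV. \<Sum>z'\<in>UNIV. D$(x,z)$(y,z') * (A $ y $ x * (if z' = z then 1 else 0)))"
    by (simp only: sum_UNIV_pair fst_conv snd_conv)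
  also have "\<dots> = (\<Sum>x\<in>UNIV. \<Sum>z\<in>UNIV. \<Sum>y\<in>UNIV. D$(x,z)$(y,z) * A $ y $ x)"
    by (simp only: sum_delta1)
  also have "\<dots> = (\<Sum>x\<in>UNIV. \<Sum>y\<in>UNIV. \<Sum>z\<in>UNIV. D$(x,z)$(y,z) * A $ y $ x)"
    by (rule sum.cong[OF refl], rule sum.swap)
  also have "\<dots> = (\<Sum>x\<in>UNIV. \<Sum>y\<in>UNIV. mg1 D $ x $ y * A $ y $ x)"
    by (simp add: mg1_def sum_distrib_right)
  finally show ?thesis .
qed

lemma state_tensor2:
  fixes D :: "complex^('n::finite\<times>'n)^('n\<times>'n)"
  shows "state_of D (tensor (mat 1) B) = (\<Sum>x\<in>UNIV. \<Sum>y\<in>UNIV. mg2 D $ x $ y * B $ y $ x)"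
proof -
  have "state_of D (tensor (mat 1) B) = (\<Sum>p\<in>UNIV. \<Sum>q\<in>UNIV. D$p$q * ((if fst q = fst p then 1 else 0) * B $ snd q $ snd p))"
    by (simp add: state_of_def mtrace_def matrix_matrix_mult_def tensor_def mat_def)
  also have "\<dots> = (\<Sum>z\<in>UNIV. \<Sum>x\<in>UNIV. \<Sum>z'\<in>UNIV. \<Sum>y\<in>UNIV. D$(z,x)$(z',y) * ((if z' = z then 1 else 0) * B $ y $ x))"
    by (simp only: sum_UNIV_pair fst_conv snd_conv)
  also have "\<dots> = (\<Sum>z\<in>UNIV. \<Sum>x\<in>UNIV. \<Sum>y\<in>UNIV. D$(z,x)$(z,y) * B $ y $ x)"
    by (subst sum.swap[where B=UNIV], simp only: sum_delta2)
  also have "\<dots> = (\<Sum>x\<in>UNIV. \<Sum>y\<in>UNIV. \<Sum>z\<in>UNIV. D$(z,x)$(z,y) * B $ y $ x)"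
    by (subst sum.swap, rule sum.cong[OF refl], rule sum.swap)
  also have "\<dots> = (\<Sum>x\<in>UNIV. \<Sum>y\<in>UNIV. mg2 D $ x $ y * B $ y $ x)"
    by (simp add: mg2_def sum_distrib_right)
  finally show ?thesis .
qed



definition bf :: "complex^'m^'m \<Rightarrow> complex^'m \<Rightarrow> complex^'m \<Rightarrow> complex" where
  "bf D u v = (\<Sum>i\<in>UNIV. \<Sum>j\<in>UNIV. cnj (u $ i) * D $ i $ j * v $ j)"

lemma qf_bf: "qf D v = bf D v v" by (simp add: qf_def bf_def)

lemma bf_add1: "bf D (u + u') v = bf D u v + bf D u' v"
  by (simp add: bf_def algebra_simps sum.distrib)
lemma bf_add2: "bf D u (v + v') = bf D u v + bf D u v'"
  by (simp add: bf_def algebra_simps sum.distrib)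
lemma bf_scale1: "bf D (c *s u) v = cnj c * bf D u v"
  by (simp add: bf_def algebra_simps sum_distrib_left)
lemma bf_scale2: "bf D u (c *s v) = c * bf D u v"
  by (simp add: bf_def algebra_simps sum_distrib_left)

lemma qf_add: "qf D (u + v) = qf D u + qf D v + bf D u v + bf D v u"
  by (simp add: qf_bf bf_add1 bf_add2)

lemma psd_real: "psd D \<Longrightarrow> qf D v \<in> \<real> \<and> 0 \<le> Re (qf D v)"
  unfolding psd_def qf_def by (auto simp: complex_is_Real_iff)

lemma psd_Im: "psd D \<Longrightarrow> Im (qf D v) = 0"
  unfolding psd_def qf_def by auto
lemma psd_Re: "psd D \<Longrightarrow> 0 \<le> Re (qf D v)"
  unfolding psd_def qf_def by auto

lemma bf_axis: "bf D (axis p 1) v = (D *v v) $ p"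
proof -
  have "bf D (axis p 1) v = (\<Sum>i\<in>UNIV. if i = p then (\<Sum>j\<in>UNIV. D $ i $ j * v $ j) else 0)"
    unfolding bf_def by (rule sum.cong) (auto simp: axis_def sum_distrib_left)
  also have "\<dots> = (D *v v) $ p" by (simp add: matrix_vector_mult_def)
  finally show ?thesis .
qed

lemma psd_bf_herm:
  assumes "psd D" shows "bf D u v = cnj (bf D v u)"
proof -
  have i1: "Im (qf D (u + v)) = 0" "Im (qf D u) = 0" "Im (qf D v) = 0"
    using psd_Im[OF assms] by auto
  have i2: "Im (qf D (u + \<i> *s v)) = 0" using psd_Im[OF assms] by auto
  have e1: "qf D (u + v) = qf D u + qf D v + bf D u v + bf D v u" by (rule qf_add)
  have e2: "qf D (u + \<i> *s v) = qf D u + qf D v + \<i> * bf D u v - \<i> * bf D v u"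
    by (simp add: qf_bf bf_add1 bf_add2 bf_scale1 bf_scale2 algebra_simps)
  have "Im (bf D u v) + Im (bf D v u) = 0" using i1 e1 by simp
  moreover have "Re (bf D u v) - Re (bf D v u) = 0" using i1 i2 e2 by simp
  ultimately show ?thesis by (simp add: complex_eq_iff)
qed

lemma bf_axis_axis: "bf D (axis i 1) (axis j 1) = D $ i $ j"
proof -
  have "bf D (axis i 1) (axis j 1) = (D *v axis j 1) $ i" by (rule bf_axis)
  also have "\<dots> = D $ i $ j"
    by (simp add: matrix_vector_mult_def axis_def if_distrib[where f="\<lambda>x. _ * x"] cong: if_cong)
  finally show ?thesis .
qed

lemma psd_herm: "psd D \<Longrightarrow> D $ i $ j = cnj (D $ j $ i)"
  by (metis bf_axis_axis psd_bf_herm)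

lemma quad_nonneg_imp:
  fixes a b :: real
  assumes "a \<ge> 0" and "\<And>l. a * l^2 + 2 * b * l \<ge> 0"
  shows "b = 0"
proof (rule ccontr)
  assume "b \<noteq> 0"
  define t where "t = 1 / (a + 1)"
  define l where "l = - t * b"
  have pos: "a + 1 > 0" using assms(1) by simp
  have tpos: "t > 0" using pos by (simp add: t_def)
  have at: "a * t < 1" using assms(1) pos by (simp add: t_def field_simps)
  have "a * l^2 + 2 * b * l = (b^2 * t) * (a*t - 2)"
    by (simp add: l_def power2_eq_square algebra_simps)
  also have "\<dots> < 0"
  proof (rule mult_pos_neg)
    show "0 < b\<^sup>2 * t" using \<open>b \<noteq> 0\<close> tpos by simp
    show "a * t - 2 < 0" using at by simp
  qed
  finally show False using assms(2)[of l] by simp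
qed

lemma psd_zero_kernel:
  assumes "psd D" and "qf D z = 0"
  shows "D *v z = 0"
proof -
  have key: "bf D y z = 0" for y
  proof -
    have h: "\<And>c. qf D (z + c *s y) = cnj c * c * qf D y + c * bf D z y + cnj c * bf D y z"
      using assms(2) by (simp add: qf_bf bf_add1 bf_add2 bf_scale1 bf_scale2 algebra_simps)
    have herm: "bf D z y = cnj (bf D y z)" by (rule psd_bf_herm[OF assms(1)])
    have r1: "\<And>l::real. 0 \<le> Re (qf D y) * l^2 + 2 * Re (bf D y z) * l"
    proof -
      fix l :: real
      have "0 \<le> Re (qf D (z + complex_of_real l *s y))" using psd_Re[OF assms(1)] .
      also have "Re (qf D (z + complex_of_real l *s y)) = Re (qf D y) * l^2 + 2 * Re (bf D y z) * l"
        unfolding h herm by (simp add: power2_eq_square algebra_simps)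
      finally show "0 \<le> Re (qf D y) * l^2 + 2 * Re (bf D y z) * l" .
    qed
    have r2: "\<And>l::real. 0 \<le> Re (qf D y) * l^2 + 2 * Im (bf D y z) * l"
    proof -
      fix l :: real
      have "0 \<le> Re (qf D (z + (\<i> * complex_of_real l) *s y))" using psd_Re[OF assms(1)] .
      also have "Re (qf D (z + (\<i> * complex_of_real l) *s y)) = Re (qf D y) * l^2 + 2 * Im (bf D y z) * l"
        unfolding h herm by (simp add: power2_eq_square algebra_simps)
      finally show "0 \<le> Re (qf D y) * l^2 + 2 * Im (bf D y z) * l" .
    qed
    have "Re (bf D y z) = 0" by (rule quad_nonneg_imp[OF psd_Re[OF assms(1)] r1])
    moreover have "Im (bf D y z) = 0" by (rule quad_nonneg_imp[OF psd_Re[OF assms(1)] r2])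
    ultimately show ?thesis by (simp add: complex_eq_iff)
  qed
  show ?thesis
    unfolding vec_eq_iff by (metis bf_axis key zero_index)
qed


lemma four_distinct[simp]: "(1::4) \<noteq> 2" "(1::4) \<noteq> 3" "(1::4) \<noteq> 4" "(2::4) \<noteq> 3" "(2::4) \<noteq> 4" "(3::4) \<noteq> 4"
  "(2::4) \<noteq> 1" "(3::4) \<noteq> 1" "(4::4) \<noteq> 1" "(3::4) \<noteq> 2" "(4::4) \<noteq> 2" "(4::4) \<noteq> 3"
  by (subst bit0.Rep_inject_sym, simp add: bit0.Rep_numeral bit0.Rep_1)+

lemma sum4: "(\<Sum>x\<in>(UNIV::4 set). f x) = f 1 + f 2 + f 3 + f 4"
  unfolding UNIV_4 by (simp only: sum.insert finite_insert finite.emptyI insert_iff empty_iff four_distinct simp_thms sum.empty add.assoc add_0_right) 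

declare eq_numeral_iff_iszero[where 'a="'a::finite bit0", simp del]
lemma "(2::4) \<noteq> 3 \<and> ((2::4, 1::4) \<in> {(3,3),(4,1)} \<longleftrightarrow> False) \<and> ((2::4, 1::4) \<in> {(3,3),(2,1)})" by simp
lemma "(\<Sum>x\<in>(UNIV::4 set). f x) = f 1 + f 2 + f 3 + f 4" by (simp add: sum4)


lemma sum_idx: "(\<Sum>p\<in>(UNIV::(4\<times>4) set). f p) =
  f (1,1) + f (1,2) + f (1,3) + f (1,4) + f (2,1) + f (2,2) + f (2,3) + f (2,4) +
  f (3,1) + f (3,2) + f (3,3) + f (3,4) + f (4,1) + f (4,2) + f (4,3) + f (4,4)"
  by (simp add: sum_UNIV_pair sum4 add.assoc)

lemma sum5: "(\<Sum>k<5::nat. f k) = f 0 + f 1 + f 2 + f 3 + f 4"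
  by (simp add: numeral_eq_Suc add.assoc)

definition cells :: "nat \<Rightarrow> (4\<times>4) set" where
  "cells k = (if k = 0 then {(2,1),(3,3),(4,4)} else if k = 1 then {(1,4),(2,2)}
     else if k = 2 then {(1,1),(3,2)} else if k = 3 then {(2,4),(3,3),(4,2)} else {(1,3),(4,1)})"

definition wv :: "nat \<Rightarrow> 4\<times>4 \<Rightarrow> complex" where
  "wv k p = (if p \<in> cells k then 1 else 0)"

definition D0 :: "complex^(4\<times>4)^(4\<times>4)" where
  "D0 = (\<chi> p q. (\<Sum>k<5. wv k p * wv k q) / 12)"

lemma D0_trace: "mtrace D0 = 1"
  by (simp add: mtrace_def D0_def sum_idx sum5 wv_def cells_def)

lemma D0_mg1: "mg1 D0 $ x $ y = (if x = y then 1/4 else 0)"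
  using exhaust_4[of x] exhaust_4[of y]
  by (auto simp: mg1_def D0_def sum4 sum5 wv_def cells_def)

lemma D0_mg2: "mg2 D0 $ x $ y = (if x = y then 1/4 else 0)"
  using exhaust_4[of x] exhaust_4[of y]
  by (auto simp: mg2_def D0_def sum4 sum5 wv_def cells_def)


lemma qf_gram:
  fixes w :: "nat \<Rightarrow> 'm::finite \<Rightarrow> complex"
  shows "qf (\<chi> p q. (\<Sum>k\<in>K. w k p * w k q) / c) v =
     (\<Sum>k\<in>K. (\<Sum>i\<in>UNIV. cnj (v $ i) * w k i) * (\<Sum>j\<in>UNIV. w k j * v $ j)) / c"
proof -
  have "qf (\<chi> p q. (\<Sum>k\<in>K. w k p * w k q) / c) v =
     (\<Sum>i\<in>UNIV. \<Sum>j\<in>UNIV. \<Sum>k\<in>K. cnj (v $ i) * w k i * (w k j * v $ j) / c)"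
    by (simp add: qf_def sum_distrib_left sum_distrib_right sum_divide_distrib mult_ac)
  also have "\<dots> = (\<Sum>i\<in>UNIV. \<Sum>k\<in>K. \<Sum>j\<in>UNIV. cnj (v $ i) * w k i * (w k j * v $ j) / c)"
    by (rule sum.cong[OF refl], rule sum.swap)
  also have "\<dots> = (\<Sum>k\<in>K. \<Sum>i\<in>UNIV. \<Sum>j\<in>UNIV. cnj (v $ i) * w k i * (w k j * v $ j) / c)"
    by (rule sum.swap)
  also have "\<dots> = (\<Sum>k\<in>K. (\<Sum>i\<in>UNIV. cnj (v $ i) * w k i) * (\<Sum>j\<in>UNIV. w k j * v $ j)) / c"
    by (simp add: sum_product sum_divide_distrib)
  finally show ?thesis .
qed
lemma psd_gram:
  fixes w :: "nat \<Rightarrow> 'm::finite \<Rightarrow> complex"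
  assumes real: "\<And>k p. cnj (w k p) = w k p" and c: "c > 0"
  shows "psd ((\<chi> p q. (\<Sum>k\<in>K. w k p * w k q) / complex_of_real c) :: complex^'m^'m)"
proof -
  have "qf ((\<chi> p q. (\<Sum>k\<in>K. w k p * w k q) / complex_of_real c) :: complex^'m^'m) v =
      complex_of_real ((\<Sum>k\<in>K. (cmod (\<Sum>j\<in>UNIV. w k j * v $ j))^2) / c)" for v
  proof -
    have e: "(\<Sum>i\<in>UNIV. cnj (v $ i) * w k i) = cnj (\<Sum>j\<in>UNIV. w k j * v $ j)" for k
      by (simp add: real mult.commute)
    have f: "\<And>z. cnj z * z = complex_of_real ((cmod z)^2)"
      by (metis complex_norm_square mult.commute norm_of_real)
    show ?thesis unfolding qf_gram e f by simp
  qed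
  then show ?thesis
    unfolding psd_def qf_def[symmetric] using c
    by (simp add: sum_nonneg)
qed

lemma D0_psd: "psd D0"
proof -
  have "D0 = (\<chi> p q. (\<Sum>k\<in>{..<5}. wv k p * wv k q) / complex_of_real 12)"
    by (simp add: D0_def)
  moreover have "psd ((\<chi> p q. (\<Sum>k\<in>{..<5}. wv k p * wv k q) / complex_of_real 12) :: complex^(4\<times>4)^(4\<times>4))"
    by (rule psd_gram) (auto simp: wv_def)
  ultimately show ?thesis by simp
qed

lemma marg_from_mg:
  fixes D :: "complex^('n::finite\<times>'n)^('n\<times>'n)"
  assumes "\<And>x y. mg1 D $ x $ y = (if x = y then 1 / of_nat CARD('n) else 0)"
      and "\<And>x y. mg2 D $ x $ y = (if x = y then 1 / of_nat CARD('n) else 0)"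
  shows "(\<forall>A::complex^'n^'n. state_of D (tensor A (mat 1)) = ntrace A)
     \<and> (\<forall>B::complex^'n^'n. state_of D (tensor (mat 1) B) = ntrace B)"
  by (simp add: state_tensor1 state_tensor2 assms ntrace_def mtrace_def if_distrib[where f="\<lambda>x. x * _"]
        sum_divide_distrib cong: if_cong)

lemma D0_Gamma: "D0 \<in> Gamma"
  unfolding Gamma_def marginal_tracial_def density_matrix_def
  using D0_psd D0_trace marg_from_mg[of D0] D0_mg1 D0_mg2 by simp

definition wvec :: "nat \<Rightarrow> complex^(4\<times>4)" where "wvec k = (\<chi> p. wv k p)"

definition pk :: "nat \<Rightarrow> 4\<times>4" where
  "pk k = (if k = 0 then (2,1) else if k = 1 then (1,4) else if k = 2 then (1,1) else if k = 3 then (2,4) else (1,3))"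

lemma less5_cases: "k < (5::nat) \<Longrightarrow> k = 0 \<or> k = 1 \<or> k = 2 \<or> k = 3 \<or> k = 4" by auto

lemma wv_pk: "k < 5 \<Longrightarrow> m < 5 \<Longrightarrow> wv m (pk k) = (if m = k then 1 else 0)"
  using less5_cases[of k] less5_cases[of m] by (auto simp: wv_def cells_def pk_def)

lemma row_D0: "row i D0 = (\<Sum>k<5. (wv k i / 12) *s wvec k)"
  by (simp add: vec_eq_iff row_def D0_def wvec_def sum_component sum_divide_distrib)

lemma row_pk: "k < 5 \<Longrightarrow> row (pk k) D0 = (1/12) *s wvec k"
proof -
  assume k: "k < 5"
  have "row (pk k) D0 = (\<Sum>m<5. (if m = k then (1/12) *s wvec k else 0))"
    unfolding row_D0 by (rule sum.cong) (auto simp: wv_pk k)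
  also have "\<dots> = (1/12) *s wvec k" using k by simp
  finally show ?thesis .
qed

lemma wvec_inj: "inj_on wvec {..<5}"
proof (rule inj_onI)
  fix m k assume m: "m \<in> {..<5}" and k: "k \<in> {..<5}" and e: "wvec m = wvec k"
  have "wvec m $ pk k = wvec k $ pk k" using e by simp
  then show "m = k" using m k by (simp add: wvec_def wv_pk split: if_splits)
qed

lemma wvec_indep: "vec.independent (wvec ` {..<5})"
proof
  assume "vec.dependent (wvec ` {..<5})"
  then obtain u where u: "\<exists>v\<in>wvec ` {..<5}. u v \<noteq> 0" and s: "(\<Sum>v\<in>wvec ` {..<5}. u v *s v) = 0"
    using vec.dependent_finite[of "wvec ` {..<5}"] by auto
  have s2: "(\<Sum>m<5. u (wvec m) *s wvec m) = 0"
    using s by (simp add: sum.reindex[OF wvec_inj])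
  have "u (wvec k) = 0" if k: "k < 5" for k
  proof -
    have "(\<Sum>m<5. u (wvec m) *s wvec m) $ pk k = (\<Sum>m<5. if m = k then u (wvec k) else 0)"
      unfolding sum_component by (rule sum.cong) (auto simp: wvec_def wv_pk k)
    then show ?thesis using s2 k by simp
  qed
  then show False using u by auto
qed

lemma rank_D0: "rank D0 = 5"
proof -
  have sub1: "rows D0 \<subseteq> vec.span (wvec ` {..<5})"
  proof
    fix r assume "r \<in> rows D0"
    then obtain i where r: "r = row i D0" by (auto simp: rows_def)
    show "r \<in> vec.span (wvec ` {..<5})" unfolding r row_D0
      by (intro vec.span_sum vec.span_scale vec.span_base) auto
  qed
  have sub2: "wvec ` {..<5} \<subseteq> vec.span (rows D0)"
  proof
    fix v assume "v \<in> wvec ` {..<5}"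
    then obtain k where k: "k < 5" and v: "v = wvec k" by auto
    have "v = 12 *s row (pk k) D0" using k by (simp add: row_pk v vector_smult_assoc)
    moreover have "row (pk k) D0 \<in> rows D0" unfolding rows_def by blast
    ultimately show "v \<in> vec.span (rows D0)" by (simp add: vec.span_base vec.span_scale)
  qed
  have "vec.span (rows D0) = vec.span (wvec ` {..<5})"
    using sub1 sub2 vec.span_eq by blast
  then have "vec.dim (rows D0) = vec.dim (wvec ` {..<5})" by (rule vec.span_eq_dim)
  also have "\<dots> = card (wvec ` {..<5})" by (rule vec.dim_eq_card_independent[OF wvec_indep])
  also have "\<dots> = 5" by (simp add: card_image[OF wvec_inj])
  finally show ?thesis by (simp add: row_rank_def_gen)
qed


lemma mv_axis: "(M *v axis q (1::complex)) $ p = M $ p $ q"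
  by (simp add: matrix_vector_mult_def axis_def if_distrib[where f="\<lambda>x. _ * x"] cong: if_cong)

definition emat :: "'n \<Rightarrow> 'n \<Rightarrow> complex^'n^'n" where
  "emat y x = (\<chi> r s. if r = y \<and> s = x then 1 else 0)"

lemma sum_emat: "(\<Sum>x'\<in>UNIV. \<Sum>y'\<in>UNIV. f x' y' * emat y x $ y' $ x') = f x y"
proof -
  have "\<And>x'. (\<Sum>y'\<in>UNIV. f x' y' * emat y x $ y' $ x') = (if x' = x then f x y else 0)"
    by (simp add: emat_def if_distrib[where f="\<lambda>t. _ * t"] cong: if_cong)
  then show ?thesis by simp
qed

lemma ntrace_emat: "ntrace (emat y x :: complex^'n::finite^'n) = (if x = y then 1 / of_nat CARD('n) else 0)"
proof (cases "x = y")
  case False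
  then have "\<And>i. (if i = y \<and> i = x then 1 else 0) = (0::complex)" by auto
  then show ?thesis using False by (simp add: ntrace_def mtrace_def emat_def)
qed (simp add: ntrace_def mtrace_def emat_def)

lemma Gamma_mg1:
  fixes a :: "complex^('n::finite\<times>'n)^('n\<times>'n)"
  assumes "a \<in> Gamma"
  shows "mg1 a $ x $ y = (if x = y then 1 / of_nat CARD('n) else 0)"
proof -
  have "state_of a (tensor (emat y x) (mat 1)) = ntrace (emat y x)"
    using assms by (auto simp: Gamma_def marginal_tracial_def)
  then show ?thesis by (simp add: state_tensor1 sum_emat ntrace_emat)
qed

lemma Gamma_mg2:
  fixes a :: "complex^('n::finite\<times>'n)^('n\<times>'n)"
  assumes "a \<in> Gamma"
  shows "mg2 a $ x $ y = (if x = y then 1 / of_nat CARD('n) else 0)"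
proof -
  have "state_of a (tensor (mat 1) (emat y x)) = ntrace (emat y x)"
    using assms by (auto simp: Gamma_def marginal_tracial_def)
  then show ?thesis by (simp add: state_tensor2 sum_emat ntrace_emat)
qed

lemma Gamma_psd: "a \<in> Gamma \<Longrightarrow> psd a"
  by (simp add: Gamma_def marginal_tracial_def density_matrix_def)

lemma D0_col: "k < 5 \<Longrightarrow> D0 $ p $ pk k = wv k p / 12"
proof -
  assume k: "k < 5"
  have "(\<Sum>m<5. wv m p * wv m (pk k)) = (\<Sum>m<5. if m = k then wv k p else 0)"
    by (rule sum.cong) (auto simp: wv_pk k)
  then show ?thesis using k by (simp add: D0_def)
qed

definition zq :: "4\<times>4 \<Rightarrow> complex^(4\<times>4)" where
  "zq q = axis q 1 - (\<Sum>j<5. wv j q *s axis (pk j) 1)"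

lemma mv_zq: "(M *v zq q) $ p = M $ p $ q - (\<Sum>j<5. wv j q * M $ p $ pk j)"
  by (simp add: zq_def matrix_vector_mult_diff_distrib vec.sum
        vec.scale sum_component mv_axis mult.commute)

lemma D0_zq: "D0 *v zq q = 0"
proof -
  have "(D0 *v zq q) $ p = 0" for p
  proof -
    have "(\<Sum>j<5. wv j q * D0 $ p $ pk j) = (\<Sum>j<5. wv j q * (wv j p / 12))"
      by (rule sum.cong) (auto simp: D0_col)
    also have "\<dots> = D0 $ p $ q" by (simp add: D0_def sum_divide_distrib mult.commute)
    finally show ?thesis by (simp add: mv_zq)
  qed
  then show ?thesis by (simp add: vec_eq_iff)
qed



lemma wv_real: "cnj (wv i p) = wv i p" by (simp add: wv_def)

lemma D0_unique:
  assumes aG: "a \<in> Gamma" and ker: "\<And>z. D0 *v z = 0 \<Longrightarrow> a *v z = 0"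
  shows "a = D0"
proof -
  define K where "K i j = a $ pk i $ pk j" for i j
  have ps: "psd a" using Gamma_psd[OF aG] .
  have col: "a $ p $ q = (\<Sum>j<5. wv j q * a $ p $ pk j)" for p q
  proof -
    have "(a *v zq q) $ p = 0" using ker[OF D0_zq] by simp
    then show ?thesis by (simp add: mv_zq)
  qed
  have rowf: "a $ p $ pk j = (\<Sum>i<5. wv i p * K i j)" for p j
  proof -
    have "a $ p $ pk j = cnj (a $ pk j $ p)" by (rule psd_herm[OF ps])
    also have "\<dots> = cnj (\<Sum>i<5. wv i p * a $ pk j $ pk i)" by (subst col, rule refl)
    also have "\<dots> = (\<Sum>i<5. wv i p * cnj (a $ pk j $ pk i))" by (simp add: wv_real)
    also have "\<dots> = (\<Sum>i<5. wv i p * K i j)"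
      by (rule sum.cong[OF refl]) (simp add: K_def psd_herm[OF ps, of "pk i" "pk j" for i])
    finally show ?thesis .
  qed
  have form: "a $ p $ q = (\<Sum>j<5. wv j q * (\<Sum>i<5. wv i p * K i j))" for p q
    by (subst col) (simp add: rowf)
  have E1: "(\<Sum>z\<in>UNIV. (\<Sum>j<5. wv j (y,z) * (\<Sum>i<5. wv i (x,z) * K i j))) = (if x = y then 1/4 else 0)" for x y
    using Gamma_mg1[OF aG, of x y] by (simp add: mg1_def form)
  have E2: "(\<Sum>z\<in>UNIV. (\<Sum>j<5. wv j (z,y) * (\<Sum>i<5. wv i (z,x) * K i j))) = (if x = y then 1/4 else 0)" for x y
    using Gamma_mg2[OF aG, of x y] by (simp add: mg2_def form)
  note EE = E1[of 1 1] E1[of 1 2] E1[of 1 3] E1[of 1 4] E1[of 2 1] E1[of 2 2] E1[of 2 3] E1[of 2 4] E1[of 3 1] E1[of 3 2] E1[of 3 3] E1[of 3 4] E1[of 4 1] E1[of 4 2] E1[of 4 3] E1[of 4 4] E2[of 1 1] E2[of 1 2] E2[of 1 3] E2[of 1 4] E2[of 2 1] E2[of 2 2] E2[of 2 3] E2[of 2 4] E2[of 3 1] E2[of 3 2] E2[of 3 3] E2[of 3 4] E2[of 4 1] E2[of 4 2] E2[of 4 3] E2[of 4 4]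
  note EEs = EE[simplified sum4 sum5 wv_def cells_def, simplified]
  note ER = EEs[THEN arg_cong[where f=Re], simplified]
  note EI = EEs[THEN arg_cong[where f=Im], simplified]
  have KR: "Re (K (0) (0)) = 1/12" "Re (K (0) (Suc 0)) = 0" "Re (K (0) (2)) = 0" "Re (K (0) (3)) = 0" "Re (K (0) (4)) = 0" "Re (K (Suc 0) (0)) = 0" "Re (K (Suc 0) (Suc 0)) = 1/12" "Re (K (Suc 0) (2)) = 0" "Re (K (Suc 0) (3)) = 0" "Re (K (Suc 0) (4)) = 0" "Re (K (2) (0)) = 0" "Re (K (2) (Suc 0)) = 0" "Re (K (2) (2)) = 1/12" "Re (K (2) (3)) = 0" "Re (K (2) (4)) = 0" "Re (K (3) (0)) = 0" "Re (K (3) (Suc 0)) = 0" "Re (K (3) (2)) = 0" "Re (K (3) (3)) = 1/12" "Re (K (3) (4)) = 0" "Re (K (4) (0)) = 0" "Re (K (4) (Suc 0)) = 0" "Re (K (4) (2)) = 0" "Re (K (4) (3)) = 0" "Re (K (4) (4)) = 1/12"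
    by (insert ER, linarith)+
  have KI: "Im (K (0) (0)) = 0" "Im (K (0) (Suc 0)) = 0" "Im (K (0) (2)) = 0" "Im (K (0) (3)) = 0" "Im (K (0) (4)) = 0" "Im (K (Suc 0) (0)) = 0" "Im (K (Suc 0) (Suc 0)) = 0" "Im (K (Suc 0) (2)) = 0" "Im (K (Suc 0) (3)) = 0" "Im (K (Suc 0) (4)) = 0" "Im (K (2) (0)) = 0" "Im (K (2) (Suc 0)) = 0" "Im (K (2) (2)) = 0" "Im (K (2) (3)) = 0" "Im (K (2) (4)) = 0" "Im (K (3) (0)) = 0" "Im (K (3) (Suc 0)) = 0" "Im (K (3) (2)) = 0" "Im (K (3) (3)) = 0" "Im (K (3) (4)) = 0" "Im (K (4) (0)) = 0" "Im (K (4) (Suc 0)) = 0" "Im (K (4) (2)) = 0" "Im (K (4) (3)) = 0" "Im (K (4) (4)) = 0"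
    by (insert EI, linarith)+
  have Kv: "K i j = (if i = j then 1/12 else 0)" if "i < 5" "j < 5" for i j
  proof -
    have "Re (K i j) = (if i = j then 1/12 else 0) \<and> Im (K i j) = 0"
      using less5_cases[OF that(1)] less5_cases[OF that(2)] KR KI by (elim disjE) simp_all
    then show ?thesis by (simp add: complex_eq_iff)
  qed
  have "a $ p $ q = D0 $ p $ q" for p q
  proof -
    have "\<And>j. j < 5 \<Longrightarrow> (\<Sum>i<5. wv i p * K i j) = (\<Sum>i<5. if i = j then wv j p / 12 else 0)"
      by (rule sum.cong) (auto simp: Kv)
    then have "a $ p $ q = (\<Sum>j<5. wv j q * (wv j p / 12))"
      unfolding form by (intro sum.cong) auto
    then show ?thesis by (simp add: D0_def sum_divide_distrib mult.commute)
  qed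
  then show ?thesis by (simp add: vec_eq_iff)
qed

lemma qf_mv: "qf D z = (\<Sum>i\<in>UNIV. cnj (z $ i) * (D *v z) $ i)"
  by (simp add: qf_def matrix_vector_mult_def sum_distrib_left mult.assoc)

lemma qf_combo: fixes s t :: real shows "qf (s *\<^sub>R a + t *\<^sub>R b) z = of_real s * qf a z + of_real t * qf b z"
  by (simp add: qf_def vector_scaleR_component scaleR_conv_of_real[where 'a=complex] algebra_simps sum.distrib sum_distrib_left)

lemma kernel_from_segment:
  assumes "psd a" "psd b" "0 < u" "u < 1" "D = (1 - u) *\<^sub>R a + u *\<^sub>R b" "D *v z = 0"
  shows "a *v z = 0"
proof -
  have "qf D z = 0" using assms(6) by (simp add: qf_mv)
  then have e: "of_real (1 - u) * qf a z + of_real u * qf b z = 0" using assms(5) qf_combo by metis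
  have ia: "Im (qf a z) = 0" and ib: "Im (qf b z) = 0" using psd_Im assms(1,2) by auto
  have ra: "Re (qf a z) \<ge> 0" and rb: "Re (qf b z) \<ge> 0" using psd_Re assms(1,2) by auto
  have "(1 - u) * Re (qf a z) + u * Re (qf b z) = 0"
    using arg_cong[OF e, of Re] by simp
  moreover have "(1 - u) * Re (qf a z) \<ge> 0" "u * Re (qf b z) \<ge> 0" using ra rb assms(3,4) by simp_all
  ultimately have "(1 - u) * Re (qf a z) = 0" by linarith
  then have "Re (qf a z) = 0" using assms(4) by simp
  then have "qf a z = 0" using ia by (simp add: complex_eq_iff)
  then show ?thesis by (rule psd_zero_kernel[OF assms(1)])
qed

lemma D0_extreme: "D0 extreme_point_of Gamma"
  unfolding extreme_point_of_def
proof (intro conjI ballI D0_Gamma)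
  fix a b :: "complex^(4\<times>4)^(4\<times>4)" assume aG: "a \<in> Gamma" and bG: "b \<in> Gamma"
  show "D0 \<notin> open_segment a b"
  proof
    assume "D0 \<in> open_segment a b"
    then obtain u where ab: "a \<noteq> b" and u: "0 < u" "u < 1" and D: "D0 = (1 - u) *\<^sub>R a + u *\<^sub>R b"
      by (auto simp: in_segment)
    have D': "D0 = (1 - (1 - u)) *\<^sub>R b + (1 - u) *\<^sub>R a" using D by (simp add: algebra_simps)
    have "a = D0"
      by (rule D0_unique[OF aG], rule kernel_from_segment[OF Gamma_psd[OF aG] Gamma_psd[OF bG] u D])
    moreover have "b = D0"
      by (rule D0_unique[OF bG], rule kernel_from_segment[OF Gamma_psd[OF bG] Gamma_psd[OF aG] _ _ D'])
         (use u in auto)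
    ultimately show False using ab by simp
  qed
qed


lemma nontrivial_kernel:
  fixes f :: "real^'a::finite \<Rightarrow> real^'b::finite"
  assumes lf: "linear f" and card: "CARD('b) < CARD('a)"
  shows "\<exists>x. x \<noteq> 0 \<and> f x = 0"
proof (rule ccontr)
  assume "\<not> (\<exists>x. x \<noteq> 0 \<and> f x = 0)"
  then have inj: "inj f" using linear_injective_0[OF lf] by auto
  have ind: "independent (f ` Basis)"
    by (rule linear_independent_injective_image[OF lf independent_Basis]) (rule inj_on_subset[OF inj subset_UNIV])
  have "card (f ` Basis) \<le> DIM(real^'b)" using independent_bound[OF ind] by simp
  moreover have "card (f ` Basis) = DIM(real^'a)" using card_image[OF inj_on_subset[OF inj subset_UNIV]] by simp
  ultimately show False using card by simp
qed

lemma rank_rows6: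
  fixes D :: "complex^'n::finite^'m::finite"
  assumes "rank D \<ge> 6"
  obtains jj :: "6 \<Rightarrow> 'm" where "\<And>c. (\<Sum>a\<in>UNIV. c a *s row (jj a) D) = 0 \<Longrightarrow> \<forall>a. c a = 0"
proof -
  obtain B where B: "B \<subseteq> rows D" "vec.independent B" "card B = vec.dim (rows D)"
    by (rule vec.basis_exists[of "rows D"])
  have "6 \<le> card B" using assms B(3) by (simp add: row_rank_def_gen)
  then obtain T where T: "T \<subseteq> B" "card T = 6" "finite T" by (rule obtain_subset_with_card_n)
  have Tind: "vec.independent T" using vec.independent_mono[OF B(2) T(1)] .
  obtain h where h: "bij_betw h (UNIV::6 set) T"
    using finite_same_card_bij[of "UNIV::6 set" T] T by auto
  have hrow: "\<exists>i. h a = row i D" for a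
  proof -
    have "h a \<in> rows D" using h T(1) B(1) by (auto simp: bij_betw_def)
    then show ?thesis by (auto simp: rows_def)
  qed
  define jj where "jj a = (SOME i. h a = row i D)" for a
  have jj: "row (jj a) D = h a" for a
    using someI_ex[OF hrow[of a]] by (simp add: jj_def)
  show ?thesis
  proof (rule that)
    fix c :: "6 \<Rightarrow> complex"
    assume s: "(\<Sum>a\<in>UNIV. c a *s row (jj a) D) = 0"
    show "\<forall>a. c a = 0"
    proof (rule ccontr)
      assume "\<not> (\<forall>a. c a = 0)"
      then obtain a0 where a0: "c a0 \<noteq> 0" by auto
      define u where "u v = c (inv_into UNIV h v)" for v
      have injh: "inj h" and Th: "T = range h" using h by (auto simp: bij_betw_def)
      have "(\<Sum>v\<in>T. u v *s v) = (\<Sum>a\<in>UNIV. u (h a) *s h a)"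
        unfolding Th by (rule sum.reindex[OF injh, unfolded comp_def])
      also have "\<dots> = (\<Sum>a\<in>UNIV. c a *s row (jj a) D)"
        by (simp add: u_def jj inv_into_f_f[OF injh])
      finally have "(\<Sum>v\<in>T. u v *s v) = 0" using s by simp
      moreover have "h a0 \<in> T" "u (h a0) \<noteq> 0" using Th a0 by (auto simp: u_def inv_into_f_f[OF injh])
      ultimately have "vec.dependent T" using vec.dependent_finite[OF T(3)] by blast
      then show False using Tind by simp
    qed
  qed
qed


definition Kx :: "real^(6\<times>6) \<Rightarrow> 6 \<Rightarrow> 6 \<Rightarrow> complex" where
  "Kx x a b = complex_of_real (x$(a,b) + x$(b,a)) + \<i> * complex_of_real (x$(a,b) - x$(b,a))"

lemma Kx_add: "Kx (x + y) a b = Kx x a b + Kx y a b"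
  by (simp add: Kx_def algebra_simps)
lemma Kx_scale: "Kx (c *\<^sub>R x) a b = of_real c * Kx x a b"
  by (simp add: Kx_def algebra_simps)
lemma Kx_herm: "cnj (Kx x a b) = Kx x b a"
  by (simp add: Kx_def algebra_simps)
lemma Kx_zero: assumes "\<And>a b. Kx x a b = 0" shows "x = 0"
proof -
  have "x $ (a,b) = 0" for a b
  proof -
    have "Re (Kx x a b) = 0" "Im (Kx x a b) = 0" using assms by auto
    then have "x$(a,b) + x$(b,a) = 0" "x$(a,b) - x$(b,a) = 0" by (simp_all add: Kx_def)
    then show ?thesis by linarith
  qed
  then show ?thesis by (simp add: vec_eq_iff)
qed

definition Hx :: "complex^'m^'m \<Rightarrow> (6 \<Rightarrow> 'm) \<Rightarrow> real^(6\<times>6) \<Rightarrow> complex^'m^'m" where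
  "Hx D jj x = (\<chi> p q. \<Sum>a\<in>UNIV. \<Sum>b\<in>UNIV. Kx x a b * D $ p $ jj a * cnj (D $ q $ jj b))"

lemma Hx_add: "Hx D jj (x + y) $ p $ q = Hx D jj x $ p $ q + Hx D jj y $ p $ q"
  by (simp add: Hx_def Kx_add algebra_simps sum.distrib)
lemma Hx_scale: "Hx D jj (c *\<^sub>R x) $ p $ q = of_real c * Hx D jj x $ p $ q"
  by (simp add: Hx_def Kx_scale sum_distrib_left mult.assoc)
lemma Hx_herm: "Hx D jj x $ p $ q = cnj (Hx D jj x $ q $ p)"
proof -
  have "cnj (Hx D jj x $ q $ p) = (\<Sum>a\<in>UNIV. \<Sum>b\<in>UNIV. Kx x b a * cnj (D $ q $ jj a) * D $ p $ jj b)"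
    by (simp add: Hx_def Kx_herm)
  also have "\<dots> = (\<Sum>b\<in>UNIV. \<Sum>a\<in>UNIV. Kx x b a * cnj (D $ q $ jj a) * D $ p $ jj b)"
    by (rule sum.swap)
  also have "\<dots> = Hx D jj x $ p $ q"
    by (simp add: Hx_def mult_ac)
  finally show ?thesis by simp
qed

definition enc :: "complex^4^4 \<Rightarrow> real^(4\<times>4)" where
  "enc M = (\<chi> st. if fst st \<le> snd st then Re (M $ fst st $ snd st) else Im (M $ fst st $ snd st))"

lemma enc_zero:
  assumes herm: "\<And>s t. M $ s $ t = cnj (M $ t $ s)" and z: "enc M = 0"
  shows "M = 0"
proof -
  have c: "(if s \<le> t then Re (M $ s $ t) else Im (M $ s $ t)) = 0" for s t
  proof -
    have "enc M $ (s,t) = 0" using z by simp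
    then show ?thesis unfolding enc_def by (simp only: vec_lambda_beta fst_conv snd_conv)
  qed
  have "M $ s $ t = 0" for s t
  proof -
    have h1: "Re (M $ s $ t) = Re (M $ t $ s)" "Im (M $ s $ t) = - Im (M $ t $ s)"
      using herm[of s t] by (simp_all add: complex_eq_iff)
    consider "s < t" | "s = t" | "t < s" by fastforce
    then show ?thesis
    proof cases
      case 1
      have le: "s \<le> t" and nle: "\<not> t \<le> s" using 1 by (metis less_imp_le, metis not_le)
      have "Re (M $ s $ t) = 0" "Im (M $ t $ s) = 0"
        using c[of s t, unfolded if_P[OF le]] c[of t s, unfolded if_not_P[OF nle]] by auto
      then show ?thesis using h1 by (simp add: complex_eq_iff)
    next
      case 2
      then have "Re (M $ s $ t) = 0" using c[of s t, unfolded if_P[OF order_refl]] by simp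
      moreover have "Im (M $ s $ t) = 0" using h1(2) 2 by simp
      ultimately show ?thesis by (simp add: complex_eq_iff)
    next
      case 3
      have le: "t \<le> s" and nle: "\<not> s \<le> t" using 3 by (metis less_imp_le, metis not_le)
      have "Im (M $ s $ t) = 0" "Re (M $ t $ s) = 0"
        using c[of s t, unfolded if_not_P[OF nle]] c[of t s, unfolded if_P[OF le]] by auto
      then show ?thesis using h1 by (simp add: complex_eq_iff)
    qed
  qed
  then show ?thesis by (simp add: vec_eq_iff)
qed

definition Lm :: "complex^(4\<times>4)^(4\<times>4) \<Rightarrow> (6 \<Rightarrow> 4\<times>4) \<Rightarrow> real^(6\<times>6) \<Rightarrow> real^((4\<times>4)\<times>bool)" where
  "Lm D jj x = (\<chi> i. if snd i then enc (mg1 (Hx D jj x)) $ fst i else enc (mg2 (Hx D jj x)) $ fst i)"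

lemma Lm_linear: "linear (Lm D jj)"
proof (rule linearI)
  fix x y :: "real^(6\<times>6)" and c :: real
  show "Lm D jj (x + y) = Lm D jj x + Lm D jj y"
    by (simp add: vec_eq_iff Lm_def enc_def mg1_def mg2_def Hx_add sum.distrib)
  show "Lm D jj (c *\<^sub>R x) = c *\<^sub>R Lm D jj x"
    by (simp add: vec_eq_iff Lm_def enc_def mg1_def mg2_def Hx_scale sum_distrib_left[symmetric])
qed



lemma herm_qf_real:
  assumes "\<And>p q. H $ p $ q = cnj (H $ q $ p)"
  shows "Im (qf H v) = 0"
proof -
  have hc: "cnj (H $ i $ j) = H $ j $ i" for i j using assms[of j i] by simp
  have "cnj (qf H v) = (\<Sum>i\<in>UNIV. \<Sum>j\<in>UNIV. v $ i * H $ j $ i * cnj (v $ j))"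
    unfolding qf_def by (simp add: hc)
  also have "\<dots> = (\<Sum>j\<in>UNIV. \<Sum>i\<in>UNIV. v $ i * H $ j $ i * cnj (v $ j))" by (rule sum.swap)
  also have "\<dots> = qf H v" unfolding qf_def by (simp add: mult_ac)
  finally show ?thesis by (metis Reals_cnj_iff complex_is_Real_iff)
qed

definition Nw :: "complex^'m \<Rightarrow> real" where "Nw w = (\<Sum>p\<in>UNIV. (cmod (w $ p))^2)"

lemma Nw_nonneg: "0 \<le> Nw w" by (simp add: Nw_def sum_nonneg)

lemma Nw_single: "(cmod (w $ i))^2 \<le> Nw w"
  unfolding Nw_def by (rule member_le_sum) auto

lemma Nw_prod: "cmod (w $ i) * cmod (w $ j) \<le> Nw w"
proof -
  have "2 * (cmod (w $ i) * cmod (w $ j)) \<le> (cmod (w $ i))^2 + (cmod (w $ j))^2"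
    using sum_squares_bound[of "cmod (w $ i)" "cmod (w $ j)"] by (simp add: mult.assoc)
  then show ?thesis using Nw_single[of w i] Nw_single[of w j] by linarith
qed

lemma qf_Hx:
  assumes "psd D"
  shows "qf (Hx D jj x) v = (\<Sum>a\<in>UNIV. \<Sum>b\<in>UNIV. Kx x a b * cnj ((D *v v) $ jj a) * (D *v v) $ jj b)"
proof -
  have h: "cnj (D $ q $ p) = D $ p $ q" for p q using psd_herm[OF assms, of p q] by simp
  have e1: "(\<Sum>p\<in>UNIV. cnj (v $ p) * D $ p $ jj a) = cnj ((D *v v) $ jj a)" for a
  proof -
    have "(\<Sum>p\<in>UNIV. cnj (v $ p) * D $ p $ jj a) = (\<Sum>p\<in>UNIV. cnj (v $ p) * cnj (D $ jj a $ p))"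
      by (simp only: h)
    then show ?thesis by (simp add: matrix_vector_mult_def mult.commute)
  qed
  have e2: "(\<Sum>q\<in>UNIV. cnj (D $ q $ jj b) * v $ q) = (D *v v) $ jj b" for b
    by (simp only: h matrix_vector_mult_def vec_lambda_beta)
  have "qf (Hx D jj x) v = (\<Sum>p\<in>UNIV. \<Sum>q\<in>UNIV. \<Sum>a\<in>UNIV. \<Sum>b\<in>UNIV.
          Kx x a b * (cnj (v $ p) * D $ p $ jj a) * (cnj (D $ q $ jj b) * v $ q))"
    by (simp add: qf_def Hx_def sum_distrib_left sum_distrib_right mult_ac)
  also have "\<dots> = (\<Sum>a\<in>UNIV. \<Sum>b\<in>UNIV. \<Sum>p\<in>UNIV. \<Sum>q\<in>UNIV.
          Kx x a b * (cnj (v $ p) * D $ p $ jj a) * (cnj (D $ q $ jj b) * v $ q))"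
  proof -
    have "\<And>p. (\<Sum>q\<in>UNIV. \<Sum>a\<in>UNIV. \<Sum>b\<in>UNIV. Kx x a b * (cnj (v $ p) * D $ p $ jj a) * (cnj (D $ q $ jj b) * v $ q))
       = (\<Sum>a\<in>UNIV. \<Sum>b\<in>UNIV. \<Sum>q\<in>UNIV. Kx x a b * (cnj (v $ p) * D $ p $ jj a) * (cnj (D $ q $ jj b) * v $ q))"
      by (subst sum.swap, rule sum.cong[OF refl], rule sum.swap)
    then have "(\<Sum>p\<in>UNIV. \<Sum>q\<in>UNIV. \<Sum>a\<in>UNIV. \<Sum>b\<in>UNIV. Kx x a b * (cnj (v $ p) * D $ p $ jj a) * (cnj (D $ q $ jj b) * v $ q))
       = (\<Sum>p\<in>UNIV. \<Sum>a\<in>UNIV. \<Sum>b\<in>UNIV. \<Sum>q\<in>UNIV. Kx x a b * (cnj (v $ p) * D $ p $ jj a) * (cnj (D $ q $ jj b) * v $ q))"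
      by simp
    also have "\<dots> = (\<Sum>a\<in>UNIV. \<Sum>p\<in>UNIV. \<Sum>b\<in>UNIV. \<Sum>q\<in>UNIV. Kx x a b * (cnj (v $ p) * D $ p $ jj a) * (cnj (D $ q $ jj b) * v $ q))"
      by (rule sum.swap)
    also have "\<dots> = (\<Sum>a\<in>UNIV. \<Sum>b\<in>UNIV. \<Sum>p\<in>UNIV. \<Sum>q\<in>UNIV. Kx x a b * (cnj (v $ p) * D $ p $ jj a) * (cnj (D $ q $ jj b) * v $ q))"
      by (rule sum.cong[OF refl], rule sum.swap)
    finally show ?thesis .
  qed
  also have "\<dots> = (\<Sum>a\<in>UNIV. \<Sum>b\<in>UNIV. Kx x a b * (\<Sum>p\<in>UNIV. cnj (v $ p) * D $ p $ jj a) * (\<Sum>q\<in>UNIV. cnj (D $ q $ jj b) * v $ q))"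
  proof -
    have pr: "\<And>(k::complex) (f::'m\<Rightarrow>complex) (g::'m\<Rightarrow>complex). k * sum f UNIV * sum g UNIV = (\<Sum>p\<in>UNIV. \<Sum>q\<in>UNIV. k * f p * g q)"
      by (simp only: mult.assoc sum_product, simp only: sum_distrib_left)
    show ?thesis by (simp only: pr)
  qed
  also have "\<dots> = (\<Sum>a\<in>UNIV. \<Sum>b\<in>UNIV. Kx x a b * cnj ((D *v v) $ jj a) * (D *v v) $ jj b)"
    by (simp add: e1 e2)
  finally show ?thesis .
qed

lemma qf_Hx_bound:
  assumes "psd D"
  shows "cmod (qf (Hx D jj x) v) \<le> (\<Sum>a\<in>UNIV. \<Sum>b\<in>UNIV. cmod (Kx x a b)) * Nw (D *v v)"
proof -
  let ?w = "D *v v"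
  have "cmod (qf (Hx D jj x) v) \<le> (\<Sum>a\<in>UNIV. \<Sum>b\<in>UNIV. cmod (Kx x a b * cnj (?w $ jj a) * ?w $ jj b))"
    unfolding qf_Hx[OF assms] by (rule order_trans[OF norm_sum sum_mono[OF norm_sum]])
  also have "\<dots> \<le> (\<Sum>a\<in>UNIV. \<Sum>b\<in>UNIV. cmod (Kx x a b) * Nw ?w)"
  proof (intro sum_mono)
    fix a b
    have "cmod (Kx x a b * cnj (?w $ jj a) * ?w $ jj b) = cmod (Kx x a b) * (cmod (?w $ jj a) * cmod (?w $ jj b))"
      by (simp add: norm_mult)
    also have "\<dots> \<le> cmod (Kx x a b) * Nw ?w"
      by (rule mult_left_mono[OF Nw_prod]) simp
    finally show "cmod (Kx x a b * cnj (?w $ jj a) * ?w $ jj b) \<le> cmod (Kx x a b) * Nw ?w" .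
  qed
  also have "\<dots> = (\<Sum>a\<in>UNIV. \<Sum>b\<in>UNIV. cmod (Kx x a b)) * Nw ?w"
    by (simp add: sum_distrib_right)
  finally show ?thesis .
qed

lemma bf_w_v: "bf D (D *v v) v = complex_of_real (Nw (D *v v))"
proof -
  have "bf D (D *v v) v = (\<Sum>i\<in>UNIV. cnj ((D *v v) $ i) * (D *v v) $ i)"
    by (simp add: bf_def matrix_vector_mult_def sum_distrib_left mult.assoc)
  also have "\<dots> = (\<Sum>i\<in>UNIV. complex_of_real ((cmod ((D *v v) $ i))^2))"
    by (rule sum.cong[OF refl]) (metis complex_norm_square mult.commute)
  finally show ?thesis by (simp add: Nw_def)
qed

lemma qf_le_G: "Re (qf D w) \<le> (\<Sum>i\<in>UNIV. \<Sum>j\<in>UNIV. cmod (D $ i $ j)) * Nw w"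
proof -
  have "Re (qf D w) \<le> cmod (qf D w)" by (rule complex_Re_le_cmod)
  also have "\<dots> \<le> (\<Sum>i\<in>UNIV. \<Sum>j\<in>UNIV. cmod (cnj (w $ i) * D $ i $ j * w $ j))"
    unfolding qf_def by (rule order_trans[OF norm_sum sum_mono[OF norm_sum]])
  also have "\<dots> \<le> (\<Sum>i\<in>UNIV. \<Sum>j\<in>UNIV. cmod (D $ i $ j) * Nw w)"
  proof (intro sum_mono)
    fix i j
    have "cmod (cnj (w $ i) * D $ i $ j * w $ j) = cmod (D $ i $ j) * (cmod (w $ i) * cmod (w $ j))"
      by (simp add: norm_mult)
    also have "\<dots> \<le> cmod (D $ i $ j) * Nw w" by (rule mult_left_mono[OF Nw_prod]) simp
    finally show "cmod (cnj (w $ i) * D $ i $ j * w $ j) \<le> cmod (D $ i $ j) * Nw w" .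
  qed
  also have "\<dots> = (\<Sum>i\<in>UNIV. \<Sum>j\<in>UNIV. cmod (D $ i $ j)) * Nw w" by (simp add: sum_distrib_right)
  finally show ?thesis .
qed

lemma Nw_bound:
  assumes ps: "psd D"
  shows "Nw (D *v v) \<le> (1 + (\<Sum>i\<in>UNIV. \<Sum>j\<in>UNIV. cmod (D $ i $ j)))^2 * Re (qf D v)"
proof -
  define G where "G = (\<Sum>i\<in>UNIV. \<Sum>j\<in>UNIV. cmod (D $ i $ j))"
  define w where "w = D *v v"
  define N where "N = Nw w"
  define l where "l = 1 + G"
  have G0: "G \<ge> 0" by (simp add: G_def sum_nonneg)
  have N0: "N \<ge> 0" by (simp add: N_def Nw_nonneg)
  have b1: "bf D w v = complex_of_real N" by (simp add: w_def N_def bf_w_v)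
  have b2: "bf D v w = complex_of_real N" using psd_bf_herm[OF ps, of v w] b1 by simp
  have e: "qf D (w + complex_of_real (- l) *s v) =
      qf D w + complex_of_real (l^2) * qf D v - complex_of_real (2 * l * N)"
  proof -
    have g: "qf D (w + c *s v) = qf D w + c * bf D w v + cnj c * bf D v w + cnj c * c * qf D v" for c
      by (simp add: qf_bf bf_add1 bf_add2 bf_scale1 bf_scale2 algebra_simps)
    show ?thesis unfolding g b1 b2 by (simp add: power2_eq_square algebra_simps)
  qed
  have "0 \<le> Re (qf D (w + complex_of_real (- l) *s v))" by (rule psd_Re[OF ps])
  also have "\<dots> = Re (qf D w) + l^2 * Re (qf D v) - 2 * l * N" unfolding e by simp
  also have "\<dots> \<le> G * N + l^2 * Re (qf D v) - 2 * l * N"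
    using qf_le_G[of D w] by (simp add: G_def N_def)
  finally have "(2 * l - G) * N \<le> l^2 * Re (qf D v)" by (simp add: algebra_simps)
  moreover have "N \<le> (2 * l - G) * N" using N0 G0 by (simp add: l_def algebra_simps)
  ultimately show ?thesis by (simp add: N_def w_def l_def G_def)
qed

lemma mtrace_mg1: "mtrace (H :: complex^('n::finite\<times>'n)^('n\<times>'n)) = (\<Sum>x\<in>UNIV. mg1 H $ x $ x)"
  by (simp add: mtrace_def mg1_def sum_UNIV_pair)

lemma mtrace_lin: "mtrace (D + t *\<^sub>R H) = mtrace D + of_real t * mtrace H"
  by (simp add: mtrace_def sum.distrib sum_distrib_left scaleR_conv_of_real[where 'a=complex])

lemma state_lin: "state_of (D + t *\<^sub>R H) X = state_of D X + of_real t * state_of H X"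
  by (simp add: state_of_def mtrace_def matrix_matrix_mult_def sum.distrib sum_distrib_left
       scaleR_conv_of_real[where 'a=complex] algebra_simps)

lemma Gamma_perturb:
  fixes D H :: "complex^('n::finite\<times>'n)^('n\<times>'n)"
  assumes DG: "D \<in> Gamma" and m1: "mg1 H = 0" and m2: "mg2 H = 0" and ps: "psd (D + t *\<^sub>R H)"
  shows "D + t *\<^sub>R H \<in> Gamma"
proof -
  have Dm: "marginal_tracial D" using DG by (simp add: Gamma_def)
  have trH: "mtrace H = 0" by (simp add: mtrace_mg1 m1)
  have s1: "state_of H (tensor A (mat 1)) = 0" for A :: "complex^'n^'n"
    by (simp add: state_tensor1 m1)
  have s2: "state_of H (tensor (mat 1) B) = 0" for B :: "complex^'n^'n"
    by (simp add: state_tensor2 m2)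
  show ?thesis
    using Dm ps trH s1 s2
    by (simp add: Gamma_def marginal_tracial_def density_matrix_def mtrace_lin state_lin)
qed

lemma qf_lin: "qf (D + t *\<^sub>R H) v = qf D v + of_real t * qf H v"
  by (simp add: qf_def vector_scaleR_component scaleR_conv_of_real[where 'a=complex] algebra_simps
      sum.distrib sum_distrib_left)

lemma Hx_nonzero:
  fixes D :: "complex^'m::finite^'m"
  assumes ps: "psd D" and ind: "\<And>c. (\<Sum>a\<in>UNIV. c a *s row (jj a) D) = 0 \<Longrightarrow> \<forall>a. c a = 0"
    and H0: "Hx D jj x = 0"
  shows "x = 0"
proof -
  let ?K = "Kx x"
  have hc: "cnj (D $ q $ p) = D $ p $ q" for p q using psd_herm[OF ps, of p q] by simp
  define c where "c a q = (\<Sum>b\<in>UNIV. ?K a b * cnj (D $ q $ jj b))" for a q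
  have A: "c a q = 0" for a q
  proof -
    have "(\<Sum>a\<in>UNIV. cnj (c a q) *s row (jj a) D) = 0"
    proof -
      have "(\<Sum>a\<in>UNIV. cnj (c a q) *s row (jj a) D) $ p = 0" for p
      proof -
        have "(\<Sum>a\<in>UNIV. cnj (c a q) *s row (jj a) D) $ p = (\<Sum>a\<in>UNIV. cnj (c a q) * D $ jj a $ p)"
          by (simp add: sum_component row_def)
        also have "\<dots> = (\<Sum>a\<in>UNIV. cnj (c a q) * cnj (D $ p $ jj a))"
          by (rule sum.cong[OF refl]) (simp only: hc)
        also have "\<dots> = cnj (\<Sum>a\<in>UNIV. c a q * D $ p $ jj a)"
          by simp
        also have "(\<Sum>a\<in>UNIV. c a q * D $ p $ jj a) = Hx D jj x $ p $ q"
          by (simp add: c_def Hx_def sum_distrib_left sum_distrib_right mult_ac)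
        finally show ?thesis using H0 by simp
      qed
      then show ?thesis by (simp add: vec_eq_iff)
    qed
    then have "cnj (c a q) = 0" using ind[of "\<lambda>a. cnj (c a q)"] by blast
    then show ?thesis by simp
  qed
  have B: "?K a b = 0" for a b
  proof -
    have "(\<Sum>b\<in>UNIV. ?K a b *s row (jj b) D) = 0"
    proof -
      have "(\<Sum>b\<in>UNIV. ?K a b *s row (jj b) D) $ q = c a q" for q
        by (simp add: sum_component row_def c_def hc)
      then show ?thesis using A by (simp add: vec_eq_iff)
    qed
    then show ?thesis using ind[of "\<lambda>b. ?K a b"] by blast
  qed
  show ?thesis by (rule Kx_zero[OF B])
qed

lemma mg1_herm: assumes h: "\<And>p q. H $ p $ q = cnj (H $ q $ p)" shows "mg1 H $ s $ t = cnj (mg1 H $ t $ s)"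
proof -
  have hc: "cnj (H $ q $ p) = H $ p $ q" for p q using h[of p q] by simp
  show ?thesis by (simp add: mg1_def hc)
qed
lemma mg2_herm: assumes h: "\<And>p q. H $ p $ q = cnj (H $ q $ p)" shows "mg2 H $ s $ t = cnj (mg2 H $ t $ s)"
proof -
  have hc: "cnj (H $ q $ p) = H $ p $ q" for p q using h[of p q] by simp
  show ?thesis by (simp add: mg2_def hc)
qed

lemma rank6_not_extreme:
  fixes D :: "complex^(4\<times>4)^(4\<times>4)"
  assumes DG: "D \<in> Gamma" and rk: "rank D \<ge> 6"
  shows "\<not> D extreme_point_of Gamma"
proof
  assume ext: "D extreme_point_of Gamma"
  have ps: "psd D" by (rule Gamma_psd[OF DG])
  obtain jj :: "6 \<Rightarrow> 4\<times>4" where ind: "\<And>c. (\<Sum>a\<in>UNIV. c a *s row (jj a) D) = 0 \<Longrightarrow> \<forall>a. c a = 0"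
    using rank_rows6[OF rk] by blast
  obtain x where x0: "x \<noteq> 0" and Lx: "Lm D jj x = 0"
    using nontrivial_kernel[OF Lm_linear[of D jj]] by auto
  define H where "H = Hx D jj x"
  have Hh: "H $ p $ q = cnj (H $ q $ p)" for p q unfolding H_def by (rule Hx_herm)
  have m1: "mg1 H = 0"
  proof (rule enc_zero)
    show "mg1 H $ s $ t = cnj (mg1 H $ t $ s)" for s t by (rule mg1_herm[OF Hh])
    show "enc (mg1 H) = 0"
    proof -
      have "enc (mg1 H) $ i = 0" for i
        using arg_cong[OF Lx, of "\<lambda>v. v $ (i, True)"] by (simp add: Lm_def H_def)
      then show ?thesis by (simp add: vec_eq_iff)
    qed
  qed
  have m2: "mg2 H = 0"
  proof (rule enc_zero)
    show "mg2 H $ s $ t = cnj (mg2 H $ t $ s)" for s t by (rule mg2_herm[OF Hh])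
    show "enc (mg2 H) = 0"
    proof -
      have "enc (mg2 H) $ i = 0" for i
        using arg_cong[OF Lx, of "\<lambda>v. v $ (i, False)"] by (simp add: Lm_def H_def)
      then show ?thesis by (simp add: vec_eq_iff)
    qed
  qed
  have Hne: "H \<noteq> 0" using Hx_nonzero[OF ps ind] x0 by (auto simp: H_def)
  define kap where "kap = (\<Sum>a\<in>UNIV. \<Sum>b\<in>UNIV. cmod (Kx x a b))"
  define F where "F = 1 + (\<Sum>i\<in>UNIV. \<Sum>j\<in>UNIV. cmod (D $ i $ j))"
  define C where "C = kap * F^2"
  define e where "e = 1 / (C + 1)"
  have kap0: "kap \<ge> 0" by (simp add: kap_def sum_nonneg)
  have C0: "C \<ge> 0" using kap0 by (simp add: C_def)
  have e0: "e > 0" using C0 by (simp add: e_def)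
  have eC: "e * C \<le> 1" using C0 by (simp add: e_def field_simps)
  have bound: "cmod (qf H v) \<le> C * Re (qf D v)" for v
  proof -
    have "cmod (qf H v) \<le> kap * Nw (D *v v)" unfolding H_def kap_def by (rule qf_Hx_bound[OF ps])
    also have "\<dots> \<le> kap * (F^2 * Re (qf D v))"
      by (rule mult_left_mono[OF _ kap0]) (simp add: F_def Nw_bound[OF ps])
    finally show ?thesis by (simp add: C_def mult.assoc)
  qed
  have pst: "psd (D + t *\<^sub>R H)" if t: "\<bar>t\<bar> \<le> e" for t
    unfolding psd_def qf_def[symmetric]
  proof (intro allI conjI)
    fix v
    show "Im (qf (D + t *\<^sub>R H) v) = 0"
      using psd_Im[OF ps, of v] herm_qf_real[OF Hh, of v] by (simp add: qf_lin)
    have Q0: "0 \<le> Re (qf D v)" by (rule psd_Re[OF ps])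
    have "\<bar>t * Re (qf H v)\<bar> \<le> e * (C * Re (qf D v))"
    proof -
      have "\<bar>t * Re (qf H v)\<bar> = \<bar>t\<bar> * \<bar>Re (qf H v)\<bar>" by (simp add: abs_mult)
      also have "\<dots> \<le> e * (C * Re (qf D v))"
        by (rule mult_mono[OF t order_trans[OF abs_Re_le_cmod bound]]) (use e0 in auto)
      finally show ?thesis .
    qed
    moreover have "e * (C * Re (qf D v)) \<le> Re (qf D v)"
      using mult_right_mono[OF eC Q0] by (simp add: mult.assoc)
    ultimately show "0 \<le> Re (qf (D + t *\<^sub>R H) v)" by (simp add: qf_lin)
  qed
  define D1 where "D1 = D + e *\<^sub>R H"
  define D2 where "D2 = D + (- e) *\<^sub>R H"
  have G1: "D1 \<in> Gamma" unfolding D1_def by (rule Gamma_perturb[OF DG m1 m2 pst]) (use e0 in simp)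
  have G2: "D2 \<in> Gamma" unfolding D2_def by (rule Gamma_perturb[OF DG m1 m2 pst]) (use e0 in simp)
  have ne: "D1 \<noteq> D2"
  proof
    assume "D1 = D2"
    have "(e - (-e)) *\<^sub>R H = D1 - D2" unfolding D1_def D2_def scaleR_diff_left by (simp add: algebra_simps)
    then have "(e - (-e)) *\<^sub>R H = 0" using \<open>D1 = D2\<close> by simp
    then have "e - (-e) = 0 \<or> H = 0" by (simp only: scaleR_eq_0_iff)
    then show False using e0 Hne by linarith
  qed
  have s12: "D1 + D2 = D + D" unfolding D1_def D2_def by (simp add: algebra_simps)
  have h2: "(1/2::real) *\<^sub>R (D + D) = ((1/2) + (1/2)) *\<^sub>R D"
    by (simp only: scaleR_add_right scaleR_add_left)
  have mid: "D = midpoint D1 D2" unfolding midpoint_def s12 h2 by simp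
  have "D \<in> open_segment D1 D2" unfolding mid using ne by (simp add: midpoint_in_open_segment)
  then show False using ext G1 G2 by (auto simp: extreme_point_of_def)
qed

theorem theorem2p6:
  shows "(\<forall>D :: complex^(4\<times>4)^(4\<times>4). D extreme_point_of Gamma \<longrightarrow> rank D \<le> 5)
       \<and> (\<exists>D :: complex^(4\<times>4)^(4\<times>4). D extreme_point_of Gamma \<and> rank D = 5)"
proof
  show "\<forall>D :: complex^(4\<times>4)^(4\<times>4). D extreme_point_of Gamma \<longrightarrow> rank D \<le> 5"
  proof (intro allI impI)
    fix D :: "complex^(4\<times>4)^(4\<times>4)"
    assume ext: "D extreme_point_of Gamma"
    then have DG: "D \<in> Gamma" by (simp add: extreme_point_of_def)
    show "rank D \<le> 5"
    proof (rule ccontr)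
      assume "\<not> rank D \<le> 5"
      then have "rank D \<ge> 6" by simp
      then show False using rank6_not_extreme[OF DG] ext by blast
    qed
  qed
  show "\<exists>D :: complex^(4\<times>4)^(4\<times>4). D extreme_point_of Gamma \<and> rank D = 5"
    using D0_extreme rank_D0 by blast
qed

end
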